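(* Let $X$ be a space possessing a binary normal closed subbase $\mathcal S$, and let $Z$ be an arbitrary space. Then every $\mathcal S$-continuous set-valued map $\Phi\colon Z\to X$ whose values $\Phi(z)$, $z\in Z$, are (nonempty) closed $\mathcal S$-convex subsets of $X$ has a continuous single-valued selection, i.e. a continuous map $h\colon Z\to X$ with $h(z)\in\Phi(z)$ for all $z\in Z$. More generally, if $A\subset Z$ is closed and every continuous map from $A$ to $X$ can be extended to a continuous map from $Z$ to $X$, then every continuous selection $g\colon A\to X$ for $\Phi|A$ extends to a continuous selection $h\colon Z\to X$ for $\Phi$ (i.e. $h|A=g$).
   Context: All spaces are Tychonoff; single-valued maps are continuous; set-valued maps have nonempty values. A family $\mathcal S$ of closed subsets of $X$ is a closed subbase if every closed subset of $X$ is an intersection of finite unions of members of $\mathcal S$. A family of sets is linked if any two of its members intersect; $\mathcal S$ is binary if every linked subfamily of $\mathcal S$ has nonempty intersection. $\mathcal S$ is normal if for every $S_0,S_1\in\mathcal S$ with $S_0\cap S_1=\varnothing$ there exist $T_0,T_1\in\mathcal S$ with $S_0\cap T_1=\varnothing=T_0\cap S_1$ and $T_0\cup T_1=X$. For $B\subset X$ let $I_{\mathcal S}(B)=\bigcap\{S\in\mathcal S: B\subset S\}$. A set $B\subset X$ is $\mathcal S$-convex if $I_{\mathcal S}(\{x,y\})\subset B$ for all $x,y\in B$. A set-valued map $\Phi\colon Z\to X$ is $\mathcal S$-continuous if for every $S\in\mathcal S$ both sets $\{z\in Z:\Phi(z)\cap(X\setminus S)\neq\varnothing\}$ and $\{z\in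 Z:\Phi(z)\subset X\setminus S\}$ are open in $Z$. *)

theory Defs
  imports "HOL-Analysis.Analysis"
begin

definition tychonoff_space :: "'a topology \<Rightarrow> bool" where
  "tychonoff_space X \<longleftrightarrow> completely_regular_space X \<and> t1_space X"

definition closed_subbase :: "'a topology \<Rightarrow> 'a set set \<Rightarrow> bool" where
  "closed_subbase X \<S> \<longleftrightarrow>
     (\<forall>S\<in>\<S>. closedin X S) \<and>
     (\<forall>C. closedin X C \<longrightarrow>
        (\<exists>\<F>. (\<forall>B\<in>\<F>. \<exists>\<T>. finite \<T> \<and> \<T> \<subseteq> \<S> \<and> B = \<Union>\<T>) \<and> C = topspace X \<inter> \<Inter>\<F>))"

definition linked :: "'a set set \<Rightarrow> bool" where
  "linked \<F> \<longleftrightarrow> (\<forall>A\<in>\<F>. \<forall>B\<in>\<F>. A \<inter> B \<noteq> {})"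

definition binary_family :: "'a set set \<Rightarrow> bool" where
  "binary_family \<S> \<longleftrightarrow> (\<forall>\<F>. \<F> \<subseteq> \<S> \<and> linked \<F> \<longrightarrow> \<Inter>\<F> \<noteq> {})"

definition normal_family :: "'a topology \<Rightarrow> 'a set set \<Rightarrow> bool" where
  "normal_family X \<S> \<longleftrightarrow>
     (\<forall>S0\<in>\<S>. \<forall>S1\<in>\<S>. S0 \<inter> S1 = {} \<longrightarrow>
        (\<exists>T0\<in>\<S>. \<exists>T1\<in>\<S>. S0 \<inter> T1 = {} \<and> T0 \<inter> S1 = {} \<and> T0 \<union> T1 = topspace X))"

definition I_hull :: "'a topology \<Rightarrow> 'a set set \<Rightarrow> 'a set \<Rightarrow> 'a set" where
  "I_hull X \<S> B = topspace X \<inter> \<Inter>{S\<in>\<S>. B \<subseteq> S}"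

definition S_convex :: "'a topology \<Rightarrow> 'a set set \<Rightarrow> 'a set \<Rightarrow> bool" where
  "S_convex X \<S> B \<longleftrightarrow> (\<forall>x\<in>B. \<forall>y\<in>B. I_hull X \<S> {x, y} \<subseteq> B)"

definition S_continuous ::
  "'b topology \<Rightarrow> 'a topology \<Rightarrow> 'a set set \<Rightarrow> ('b \<Rightarrow> 'a set) \<Rightarrow> bool" where
  "S_continuous Z X \<S> \<Phi> \<longleftrightarrow>
     (\<forall>S\<in>\<S>. openin Z {z\<in>topspace Z. \<Phi> z \<inter> (topspace X - S) \<noteq> {}} \<and>
             openin Z {z\<in>topspace Z. \<Phi> z \<subseteq> topspace X - S})"

end

theory Submission
  imports Defs
begin





lemma sub_closed: "closed_subbase X \<S> \<Longrightarrow> S \<in> \<S> \<Longrightarrow> closedin X S"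
  by (simp add: closed_subbase_def)

lemma sub_top: "closed_subbase X \<S> \<Longrightarrow> S \<in> \<S> \<Longrightarrow> S \<subseteq> topspace X"
  using sub_closed closedin_subset by blast

lemma closed_rep:
  assumes "closed_subbase X \<S>" "closedin X C"
  shows "\<exists>\<F>. (\<forall>B\<in>\<F>. \<exists>\<T>. finite \<T> \<and> \<T> \<subseteq> \<S> \<and> B = \<Union>\<T>) \<and> C = topspace X \<inter> \<Inter>\<F>"
proof -
  from assms(1) have "\<forall>C. closedin X C \<longrightarrow> (\<exists>\<F>. (\<forall>B\<in>\<F>. \<exists>\<T>. finite \<T> \<and> \<T> \<subseteq> \<S> \<and> B = \<Union>\<T>) \<and> C = topspace X \<inter> \<Inter>\<F>)"
    by (simp add: closed_subbase_def)
  from this[rule_format, OF assms(2)] show ?thesis .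
qed

lemma sep:
  assumes "closed_subbase X \<S>" "closedin X D" "d \<in> D" "y \<in> topspace X" "y \<notin> D"
  shows "\<exists>T\<in>\<S>. d \<in> T \<and> y \<notin> T"
proof -
  obtain \<F> where F: "\<forall>B\<in>\<F>. \<exists>\<T>. finite \<T> \<and> \<T> \<subseteq> \<S> \<and> B = \<Union>\<T>" and D: "D = topspace X \<inter> \<Inter>\<F>"
    using closed_rep[OF assms(1,2)] by iprover
  then obtain B where "B \<in> \<F>" "y \<notin> B" using assms(4,5) by blast
  then obtain \<T> where "\<T> \<subseteq> \<S>" "B = \<Union>\<T>" using F by blast
  moreover have "d \<in> B" using D \<open>B \<in> \<F>\<close> assms(3) by blast
  ultimately show ?thesis using \<open>y \<notin> B\<close> by blast
qed

lemma sep_pt: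
  assumes "closed_subbase X \<S>" "t1_space X" "x \<in> topspace X" "y \<in> topspace X" "x \<noteq> y"
  shows "\<exists>T\<in>\<S>. x \<in> T \<and> y \<notin> T"
proof -
  have "closedin X {x}" using assms(2,3) t1_space_closedin_singleton by metis
  from sep[OF assms(1) this, of x y] assms(4,5) show ?thesis by simp
qed

lemma P1:
  assumes "closed_subbase X \<S>" "binary_family \<S>" "t1_space X" "q \<in> topspace X" "S \<in> \<S>" "q \<notin> S" "S \<noteq> {}"
  shows "\<exists>T\<in>\<S>. q \<in> T \<and> T \<inter> S = {}"
proof (rule ccontr)
  assume N: "\<not> ?thesis"
  let ?L = "insert S {T\<in>\<S>. q \<in> T}"
  have "linked ?L" unfolding linked_def
  proof (intro ballI)
    fix A B assume "A \<in> ?L" "B \<in> ?L"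
    then show "A \<inter> B \<noteq> {}" using N assms(7) by auto
  qed
  moreover have "?L \<subseteq> \<S>" using assms(5) by blast
  ultimately have "\<Inter>?L \<noteq> {}" using assms(2) unfolding binary_family_def by blast
  then obtain x where x: "x \<in> \<Inter>?L" by blast
  then have "x \<in> S" by blast
  then have "x \<in> topspace X" "x \<noteq> q" using sub_top[OF assms(1,5)] assms(6) by auto
  then obtain T where "T \<in> \<S>" "q \<in> T" "x \<notin> T" using sep_pt[OF assms(1,3,4)] by metis
  then show False using x by blast
qed


lemma topo_eq:
  assumes "closed_subbase X \<S>"
  shows "X = topology (arbitrary union_of (finite intersection_of (\<lambda>V. V \<in> insert (topspace X) ((\<lambda>S. topspace X - S) ` \<S>)) relative_to topspace X))"
    (is "X = topology ?G")
proof -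
  let ?Q = "finite intersection_of (\<lambda>V. V \<in> insert (topspace X) ((\<lambda>S. topspace X - S) ` \<S>)) relative_to topspace X"
  have "openin X W \<longleftrightarrow> ?G W" for W
  proof
    assume W: "openin X W"
    then have cW: "closedin X (topspace X - W)" by (intro closedin_diff) auto
    obtain \<F> where F: "\<forall>B\<in>\<F>. \<exists>\<T>. finite \<T> \<and> \<T> \<subseteq> \<S> \<and> B = \<Union>\<T>" and D: "topspace X - W = topspace X \<inter> \<Inter>\<F>"
      using closed_rep[OF assms cW] by iprover
    have Wu: "W = \<Union>((\<lambda>B. topspace X - B) ` \<F>)"
    proof (rule set_eqI)
      fix x
      have "x \<in> W \<longleftrightarrow> x \<in> topspace X \<and> x \<notin> topspace X - W" using openin_subset[OF W] by auto
      also have "\<dots> \<longleftrightarrow> x \<in> topspace X \<and> x \<notin> topspace X \<inter> \<Inter>\<F>" by (simp only: D)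
      also have "\<dots> \<longleftrightarrow> x \<in> \<Union>((\<lambda>B. topspace X - B) ` \<F>)" by auto
      finally show "x \<in> W \<longleftrightarrow> x \<in> \<Union>((\<lambda>B. topspace X - B) ` \<F>)" .
    qed
    have Q: "?Q (topspace X - B)" if Bin: "B \<in> \<F>" for B
    proof -
      obtain \<T> where T: "finite \<T>" "\<T> \<subseteq> \<S>" "B = \<Union>\<T>" using bspec[OF F Bin] by iprover
      let ?U = "(\<lambda>S. topspace X - S) ` \<T>"
      have "?U \<subseteq> Collect (\<lambda>V. V \<in> insert (topspace X) ((\<lambda>S. topspace X - S) ` \<S>))"
        using T(2) by auto
      then have "(finite intersection_of (\<lambda>V. V \<in> insert (topspace X) ((\<lambda>S. topspace X - S) ` \<S>))) (\<Inter>?U)"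
        unfolding intersection_of_def using T(1) by (intro exI[of _ ?U]) auto
      moreover have "topspace X \<inter> \<Inter>?U = topspace X - B" using T(3) by auto
      ultimately show ?thesis unfolding relative_to_def by blast
    qed
    have "(\<lambda>B. topspace X - B) ` \<F> \<subseteq> Collect ?Q" using Q by blast
    then show "?G W" unfolding union_of_def arbitrary_def
      by (intro exI[of _ "(\<lambda>B. topspace X - B) ` \<F>"]) (simp add: Wu)
  next
    assume "?G W"
    then have "openin (topology ?G) W" by (simp add: openin_subbase)
    moreover have "openin X V" if "V \<in> insert (topspace X) ((\<lambda>S. topspace X - S) ` \<S>)" for V
      using that assms sub_closed by auto
    ultimately show "openin X W"
      using minimal_topology_subbase[of "\<lambda>V. V \<in> insert (topspace X) ((\<lambda>S. topspace X - S) ` \<S>)" X "topspace X" W]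
      by blast
  qed
  then show ?thesis by (simp add: topology_eq openin_subbase)
qed

lemma compact_X:
  assumes "closed_subbase X \<S>" "binary_family \<S>"
  shows "compact_space X"
proof -
  define B where "B = insert (topspace X) ((\<lambda>S. topspace X - S) ` \<S>)"
  have eq: "topology (arbitrary union_of (finite intersection_of (\<lambda>x. x \<in> B) relative_to topspace X)) = X"
    unfolding B_def by (rule sym, rule topo_eq[OF assms(1)])
  show ?thesis
  proof (rule Alexander_subbase_alt[of "topspace X" B, OF _ _ eq])
  show "topspace X \<subseteq> \<Union> B" unfolding B_def by blast
  fix C assume C: "C \<subseteq> B" "topspace X \<subseteq> \<Union>C"
  show "\<exists>C'. finite C' \<and> C' \<subseteq> C \<and> topspace X \<subseteq> \<Union>C'"
  proof (cases "topspace X \<in> C")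
    case True then show ?thesis by (intro exI[of _ "{topspace X}"]) auto
  next
    case False
    have Cm: "\<exists>S\<in>\<S>. V = topspace X - S" if V: "V \<in> C" for V
    proof -
      have "V \<in> insert (topspace X) ((\<lambda>S. topspace X - S) ` \<S>)" using C(1) V unfolding B_def by (rule subsetD)
      moreover have "V \<noteq> topspace X" using False V by auto
      ultimately show ?thesis by auto
    qed
    let ?F = "{S\<in>\<S>. topspace X - S \<in> C}"
    show ?thesis
    proof (cases "linked ?F")
      case True
      have "?F \<subseteq> \<S>" by auto
      then have ne: "\<Inter>?F \<noteq> {}" using assms(2) True unfolding binary_family_def by auto
      show ?thesis
      proof (cases "C = {}")
        case True
        then show ?thesis using C(2) by (intro exI[of _ "{}"]) auto
      next
        case False
        then obtain V0 where "V0 \<in> C" by auto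
        then obtain S0 where S0: "S0 \<in> \<S>" "V0 = topspace X - S0" using Cm by auto
        then have S0F: "S0 \<in> ?F" using \<open>V0 \<in> C\<close> by auto
        from ne obtain x where x: "x \<in> \<Inter>?F" by auto
        then have "x \<in> S0" using S0F by auto
        then have "x \<in> topspace X" using S0 sub_top[OF assms(1)] by auto
        then obtain V where V: "V \<in> C" "x \<in> V" using C(2) by auto
        then obtain S where S: "S \<in> \<S>" "V = topspace X - S" using Cm by auto
        then have "S \<in> ?F" using V by auto
        then have "x \<in> S" using x by auto
        then show ?thesis using V S by auto
      qed
    next
      case False
      then obtain S1 S2 where "S1 \<in> ?F" "S2 \<in> ?F" "S1 \<inter> S2 = {}" unfolding linked_def by auto
      then show ?thesis by (intro exI[of _ "{topspace X - S1, topspace X - S2}"]) auto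
    qed
  qed
  qed
qed

lemma fip_lemma:
  assumes "binary_family \<S>" "closed_subbase X \<S>" "C \<noteq> {}" "S_convex X \<S> C"
    and "finite \<F>" "\<F> \<subseteq> {S\<in>\<S>. p \<in> S \<and> S \<inter> C \<noteq> {}}"
  shows "C \<inter> \<Inter>\<F> \<noteq> {}"
  using assms(5,6)
proof (induction rule: finite_induct)
  case empty
  then show ?case using assms(3) by simp
next
  case (insert S F)
  then have SS: "S \<in> \<S>" "p \<in> S" "S \<inter> C \<noteq> {}" and FS: "F \<subseteq> {S\<in>\<S>. p \<in> S \<and> S \<inter> C \<noteq> {}}" by auto
  from insert.IH[OF FS] obtain y where y: "y \<in> C" "y \<in> \<Inter>F" by auto
  from SS(3) obtain c where c: "c \<in> S" "c \<in> C" by auto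
  let ?L = "insert S F \<union> {T\<in>\<S>. y \<in> T \<and> c \<in> T}"
  have Llink: "linked ?L" unfolding linked_def
  proof (intro ballI)
    fix A B assume A: "A \<in> ?L" and B: "B \<in> ?L"
    have pF: "\<And>D. D \<in> insert S F \<Longrightarrow> p \<in> D" using SS(2) FS by auto
    have yF: "\<And>D. D \<in> F \<Longrightarrow> y \<in> D" using y(2) by auto
    show "A \<inter> B \<noteq> {}"
    proof (cases "A \<in> insert S F")
      case Ai: True
      show ?thesis
      proof (cases "B \<in> insert S F")
        case True then show ?thesis using pF Ai by blast
      next
        case False
        then have "y \<in> B" "c \<in> B" using B by auto
        then show ?thesis using Ai yF c(1) by blast
      qed
    next
      case Ai: False
      then have Ayc: "y \<in> A" "c \<in> A" using A by auto
      show ?thesis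
      proof (cases "B \<in> insert S F")
        case True then show ?thesis using Ayc yF c(1) by blast
      next
        case False
        then have "y \<in> B" using B by auto
        then show ?thesis using Ayc by blast
      qed
    qed
  qed
  have Lsub: "?L \<subseteq> \<S>" using SS(1) FS by auto
  have "\<Inter>?L \<noteq> {}" using assms(1)[unfolded binary_family_def, rule_format, OF conjI[OF Lsub Llink]] .
  then obtain x where x: "x \<in> \<Inter>?L" by auto
  then have xS: "x \<in> S" "x \<in> \<Inter>F" by auto
  then have "x \<in> topspace X" using sub_top[OF assms(2) SS(1)] by auto
  then have "x \<in> I_hull X \<S> {y, c}" using x unfolding I_hull_def by auto
  moreover have "I_hull X \<S> {y, c} \<subseteq> C" using assms(4) y(1) c(2) unfolding S_convex_def by auto
  ultimately have "x \<in> C" by auto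
  then show ?case using xS by auto
qed

lemma sel_exists:
  assumes "closed_subbase X \<S>" "binary_family \<S>" "closedin X C" "C \<noteq> {}" "S_convex X \<S> C"
  shows "\<exists>x. x \<in> C \<and> (\<forall>S\<in>\<S>. p \<in> S \<and> S \<inter> C \<noteq> {} \<longrightarrow> x \<in> S)"
proof -
  have cC: "compactin X C" using closedin_compact_space[OF compact_X[OF assms(1,2)] assms(3)] .
  let ?U = "{S\<in>\<S>. p \<in> S \<and> S \<inter> C \<noteq> {}}"
  have "\<forall>D\<in>?U. closedin X D" using sub_closed[OF assms(1)] by auto
  moreover have "\<forall>\<F>. finite \<F> \<and> \<F> \<subseteq> ?U \<longrightarrow> C \<inter> \<Inter>\<F> \<noteq> {}"
    using fip_lemma[OF assms(2,1,4,5)] by auto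
  ultimately have "C \<inter> \<Inter>?U \<noteq> {}" using cC unfolding compactin_fip by auto
  then show ?thesis by auto
qed

lemma sel_unique:
  assumes "closed_subbase X \<S>" "binary_family \<S>" "normal_family X \<S>" "t1_space X"
    and "p \<in> topspace X" "C \<subseteq> topspace X"
    and x: "x \<in> C" "\<forall>S\<in>\<S>. p \<in> S \<and> S \<inter> C \<noteq> {} \<longrightarrow> x \<in> S"
    and y: "y \<in> C" "\<forall>S\<in>\<S>. p \<in> S \<and> S \<inter> C \<noteq> {} \<longrightarrow> y \<in> S"
  shows "x = y"
proof (rule ccontr)
  assume "x \<noteq> y"
  then obtain S where S: "S \<in> \<S>" "x \<in> S" "y \<notin> S" using sep_pt[OF assms(1,4)] x(1) y(1) assms(6) by blast
  then have "S \<noteq> {}" by auto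
  then obtain T where T: "T \<in> \<S>" "y \<in> T" "T \<inter> S = {}" using P1[OF assms(1,2,4)] S y(1) assms(6) by blast
  obtain T0 T1 where TT: "T0 \<in> \<S>" "T1 \<in> \<S>" "S \<inter> T1 = {}" "T0 \<inter> T = {}" "T0 \<union> T1 = topspace X"
    using assms(3) S(1) T(1,3) unfolding normal_family_def by (metis inf_commute)
  have "p \<in> T0 \<or> p \<in> T1" using TT(5) assms(5) by auto
  then show False
  proof
    assume p: "p \<in> T0"
    have "x \<notin> T1" using S(2) TT(3) by auto
    then have "x \<in> T0" using TT(5) x(1) assms(6) by auto
    then have "T0 \<inter> C \<noteq> {}" using x(1) by auto
    then have "y \<in> T0" using y(2) TT(1) p by auto
    then show False using T(2) TT(4) by auto
  next
    assume p: "p \<in> T1"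
    have "y \<notin> T0" using T(2) TT(4) by auto
    then have "y \<in> T1" using TT(5) y(1) assms(6) by auto
    then have "T1 \<inter> C \<noteq> {}" using y(1) by auto
    then have "x \<in> T1" using x(2) TT(2) p by auto
    then show False using S(2) TT(3) by auto
  qed
qed

definition rsel :: "'a set set \<Rightarrow> 'a set \<Rightarrow> 'a \<Rightarrow> 'a" where
  "rsel \<S> C p = (THE x. x \<in> C \<and> (\<forall>S\<in>\<S>. p \<in> S \<and> S \<inter> C \<noteq> {} \<longrightarrow> x \<in> S))"

lemma rsel_prop:
  assumes "closed_subbase X \<S>" "binary_family \<S>" "normal_family X \<S>" "t1_space X"
    and "p \<in> topspace X" "closedin X C" "C \<noteq> {}" "S_convex X \<S> C"
  shows "rsel \<S> C p \<in> C \<and> (\<forall>S\<in>\<S>. p \<in> S \<and> S \<inter> C \<noteq> {} \<longrightarrow> rsel \<S> C p \<in> S)"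
proof -
  have sub: "C \<subseteq> topspace X" using assms(6) closedin_subset by auto
  have "\<exists>!x. x \<in> C \<and> (\<forall>S\<in>\<S>. p \<in> S \<and> S \<inter> C \<noteq> {} \<longrightarrow> x \<in> S)"
  proof (rule ex_ex1I)
    show "\<exists>x. x \<in> C \<and> (\<forall>S\<in>\<S>. p \<in> S \<and> S \<inter> C \<noteq> {} \<longrightarrow> x \<in> S)"
      using sel_exists[OF assms(1,2,6,7,8)] .
  next
    fix x y assume hx: "x \<in> C \<and> (\<forall>S\<in>\<S>. p \<in> S \<and> S \<inter> C \<noteq> {} \<longrightarrow> x \<in> S)"
      and hy: "y \<in> C \<and> (\<forall>S\<in>\<S>. p \<in> S \<and> S \<inter> C \<noteq> {} \<longrightarrow> y \<in> S)"
    show "x = y" by (rule sel_unique[OF assms(1-5) sub conjunct1[OF hx] conjunct2[OF hx] conjunct1[OF hy] conjunct2[OF hy]])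
  qed
  then show ?thesis unfolding rsel_def by (rule theI')
qed

lemma rsel_id:
  assumes "closed_subbase X \<S>" "binary_family \<S>" "normal_family X \<S>" "t1_space X"
    and "p \<in> C" "closedin X C" "C \<noteq> {}" "S_convex X \<S> C"
  shows "rsel \<S> C p = p"
proof -
  have sub: "C \<subseteq> topspace X" using assms(6) closedin_subset by auto
  then have p: "p \<in> topspace X" using assms(5) by auto
  note R = rsel_prop[OF assms(1-4) p assms(6-8)]
  show ?thesis
    using sel_unique[OF assms(1-4) p sub, of "rsel \<S> C p" p] R assms(5) by auto
qed

lemma rsel_cont:
  assumes cs: "closed_subbase X \<S>" and bi: "binary_family \<S>" and no: "normal_family X \<S>" and t1: "t1_space X"
    and Sc: "S_continuous Z X \<S> \<Phi>"
    and vals: "\<And>z. z \<in> topspace Z \<Longrightarrow> \<Phi> z \<noteq> {} \<and> closedin X (\<Phi> z) \<and> S_convex X \<S> (\<Phi> z)"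
    and f: "continuous_map Z X f"
  shows "continuous_map Z X (\<lambda>z. rsel \<S> (\<Phi> z) (f z))"
proof -
  define h where "h = (\<lambda>z. rsel \<S> (\<Phi> z) (f z))"
  have fX: "f z \<in> topspace X" if "z \<in> topspace Z" for z
    using f that by (rule continuous_map_image_subset_topspace[THEN subsetD, OF _ imageI])
  have R: "h z \<in> \<Phi> z \<and> (\<forall>S\<in>\<S>. f z \<in> S \<and> S \<inter> \<Phi> z \<noteq> {} \<longrightarrow> h z \<in> S)" if z: "z \<in> topspace Z" for z
    unfolding h_def using rsel_prop[OF cs bi no t1 fX[OF z]] vals[OF z] by blast
  have PhiX: "\<Phi> z \<subseteq> topspace X" if "z \<in> topspace Z" for z
    using vals[OF that] closedin_subset by blast
  have hX: "h z \<in> topspace X" if "z \<in> topspace Z" for z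
    using R[OF that] PhiX[OF that] by blast
  have ScD: "openin Z {z\<in>topspace Z. \<Phi> z \<inter> (topspace X - S) \<noteq> {}}"
       "openin Z {z\<in>topspace Z. \<Phi> z \<subseteq> topspace X - S}" if "S \<in> \<S>" for S
    using Sc that unfolding S_continuous_def by auto
  define B where "B = insert (topspace X) ((\<lambda>S. topspace X - S) ` \<S>)"
  have eq: "topology (arbitrary union_of (finite intersection_of (\<lambda>x. x \<in> B) relative_to topspace X)) = X"
    unfolding B_def by (rule sym, rule topo_eq[OF cs])
  have key: "openin Z {z \<in> topspace Z. h z \<in> topspace X - S}" if S: "S \<in> \<S>" for S
  proof (subst openin_subopen, intro ballI)
    fix z0 assume z0: "z0 \<in> {z \<in> topspace Z. h z \<in> topspace X - S}"
    show "\<exists>W. openin Z W \<and> z0 \<in> W \<and> W \<subseteq> {z \<in> topspace Z. h z \<in> topspace X - S}"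
    proof (cases "S = {}")
      case True
      then show ?thesis using z0 hX by (intro exI[of _ "topspace Z"]) auto
    next
      case False
      have z0Z: "z0 \<in> topspace Z" and x0: "h z0 \<in> topspace X" "h z0 \<notin> S" using z0 by auto
      obtain T where T: "T \<in> \<S>" "h z0 \<in> T" "T \<inter> S = {}" using P1[OF cs bi t1 x0(1) S x0(2) False] by blast
      obtain T0 T1 where TT: "T0 \<in> \<S>" "T1 \<in> \<S>" "S \<inter> T1 = {}" "T0 \<inter> T = {}" "T0 \<union> T1 = topspace X"
        using no S T(1,3) unfolding normal_family_def by (metis inf_commute)
      have T1S: "\<And>x. x \<in> topspace X - T0 \<Longrightarrow> x \<in> topspace X - S" using TT(3,5) by blast
      show ?thesis
      proof (cases "f z0 \<in> T0")
        case False
        define W where "W = {z\<in>topspace Z. f z \<in> topspace X - T0} \<inter> {z\<in>topspace Z. \<Phi> z \<inter> (topspace X - T0) \<noteq> {}}"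
        have "openin Z {z\<in>topspace Z. f z \<in> topspace X - T0}"
          using openin_continuous_map_preimage[OF f] sub_closed[OF cs TT(1)] by blast
        then have Wo: "openin Z W" unfolding W_def using ScD(1)[OF TT(1)] by (rule openin_Int)
        have "h z0 \<notin> T0" using T(2) TT(4) by blast
        then have "z0 \<in> W" unfolding W_def using z0Z fX[OF z0Z] False R[OF z0Z] x0(1) by blast
        moreover have "W \<subseteq> {z \<in> topspace Z. h z \<in> topspace X - S}"
        proof
          fix z assume zW: "z \<in> W"
          then have zZ: "z \<in> topspace Z" unfolding W_def by blast
          have "f z \<in> T1" using zW TT(5) unfolding W_def by blast
          moreover have "T1 \<inter> \<Phi> z \<noteq> {}" using zW TT(5) unfolding W_def by blast
          ultimately have "h z \<in> T1" using R[OF zZ] TT(2) by blast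
          then show "z \<in> {z \<in> topspace Z. h z \<in> topspace X - S}" using zZ hX[OF zZ] TT(3) by blast
        qed
        ultimately show ?thesis using Wo by blast
      next
        case True
        have "\<Phi> z0 \<inter> T0 = {}"
        proof (rule ccontr)
          assume "\<Phi> z0 \<inter> T0 \<noteq> {}"
          then have "h z0 \<in> T0" using R[OF z0Z] TT(1) True by blast
          then show False using T(2) TT(4) by blast
        qed
        then have "z0 \<in> {z\<in>topspace Z. \<Phi> z \<subseteq> topspace X - T0}" using z0Z PhiX[OF z0Z] by blast
        moreover have "{z\<in>topspace Z. \<Phi> z \<subseteq> topspace X - T0} \<subseteq> {z \<in> topspace Z. h z \<in> topspace X - S}"
        proof
          fix z assume zW: "z \<in> {z\<in>topspace Z. \<Phi> z \<subseteq> topspace X - T0}"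
          then have zZ: "z \<in> topspace Z" by blast
          have "h z \<in> \<Phi> z" using R[OF zZ] by (rule conjunct1)
          then have "h z \<in> topspace X - T0" using zW by blast
          then show "z \<in> {z \<in> topspace Z. h z \<in> topspace X - S}" using zZ T1S by blast
        qed
        ultimately show ?thesis using ScD(2)[OF TT(1)] by blast
      qed
    qed
  qed
  have "continuous_map Z (topology (arbitrary union_of (finite intersection_of (\<lambda>x. x \<in> B) relative_to topspace X))) h"
  proof (rule continuous_map_into_topology_subbase)
    fix z assume "z \<in> topspace Z"
    then show "h z \<in> topspace (topology (arbitrary union_of (finite intersection_of (\<lambda>x. x \<in> B) relative_to topspace X)))"
      using hX by simp
  next
    fix V assume "V \<in> B"
    then consider "V = topspace X" | S where "S \<in> \<S>" "V = topspace X - S" unfolding B_def by blast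
    then show "openin Z {z \<in> topspace Z. h z \<in> V}"
    proof cases
      case 1
      then have "{z \<in> topspace Z. h z \<in> V} = topspace Z" using hX by blast
      then show ?thesis by simp
    next
      case 2
      then show ?thesis using key by simp
    qed
  qed
  then show ?thesis unfolding eq h_def .
qed

theorem theorem1p1:
  fixes X :: "'a topology" and Z :: "'b topology"
    and \<S> :: "'a set set" and \<Phi> :: "'b \<Rightarrow> 'a set"
    and A :: "'b set" and g :: "'b \<Rightarrow> 'a"
  assumes "tychonoff_space X" and "tychonoff_space Z"
    and "closed_subbase X \<S>" and "binary_family \<S>" and "normal_family X \<S>"
    and "S_continuous Z X \<S> \<Phi>"
    and "\<And>z. z \<in> topspace Z \<Longrightarrow> \<Phi> z \<noteq> {} \<and> closedin X (\<Phi> z) \<and> S_convex X \<S> (\<Phi> z)"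
  shows "(\<exists>h. continuous_map Z X h \<and> (\<forall>z\<in>topspace Z. h z \<in> \<Phi> z)) \<and>
         (closedin Z A \<and>
          (\<forall>f. continuous_map (subtopology Z A) X f \<longrightarrow>
               (\<exists>h. continuous_map Z X h \<and> (\<forall>a\<in>A. h a = f a))) \<and>
          continuous_map (subtopology Z A) X g \<and> (\<forall>a\<in>A. g a \<in> \<Phi> a)
         \<longrightarrow> (\<exists>h. continuous_map Z X h \<and> (\<forall>z\<in>topspace Z. h z \<in> \<Phi> z) \<and> (\<forall>a\<in>A. h a = g a)))"
proof -
  have t1: "t1_space X" using assms(1) unfolding tychonoff_space_def by blast
  have cont: "continuous_map Z X (\<lambda>z. rsel \<S> (\<Phi> z) (f z))" if f: "continuous_map Z X f" for f
    by (rule rsel_cont[OF assms(3,4,5) t1 assms(6) assms(7) f])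
  have sel: "rsel \<S> (\<Phi> z) (f z) \<in> \<Phi> z" if f: "continuous_map Z X f" and z: "z \<in> topspace Z" for f z
  proof -
    have fz: "f z \<in> topspace X" using continuous_map_image_subset_topspace[OF f] z by blast
    have v: "\<Phi> z \<noteq> {}" "closedin X (\<Phi> z)" "S_convex X \<S> (\<Phi> z)" using assms(7)[OF z] by auto
    show ?thesis using rsel_prop[OF assms(3,4,5) t1 fz v(2,1,3)] by (rule conjunct1)
  qed
  show ?thesis
  proof (intro conjI impI)
    show "\<exists>h. continuous_map Z X h \<and> (\<forall>z\<in>topspace Z. h z \<in> \<Phi> z)"
    proof (cases "topspace Z = {}")
      case True
      then have "continuous_map Z X (\<lambda>z. undefined)" by (simp add: continuous_map_const)
      then show ?thesis using True by blast
    next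
      case False
      then obtain z0 where z0: "z0 \<in> topspace Z" by blast
      then obtain p where p: "p \<in> \<Phi> z0" using assms(7) by blast
      have "\<Phi> z0 \<subseteq> topspace X" using assms(7)[OF z0] closedin_subset by blast
      then have "p \<in> topspace X" using p by blast
      then have fc: "continuous_map Z X (\<lambda>z. p)" by (simp add: continuous_map_const)
      show ?thesis using cont[OF fc] sel[OF fc] by blast
    qed
  next
    assume H: "closedin Z A \<and>
          (\<forall>f. continuous_map (subtopology Z A) X f \<longrightarrow>
               (\<exists>h. continuous_map Z X h \<and> (\<forall>a\<in>A. h a = f a))) \<and>
          continuous_map (subtopology Z A) X g \<and> (\<forall>a\<in>A. g a \<in> \<Phi> a)"
    then have gc: "continuous_map (subtopology Z A) X g" by blast
    obtain f where f: "continuous_map Z X f" "\<forall>a\<in>A. f a = g a" using H gc by blast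
    have AZ: "A \<subseteq> topspace Z" using H closedin_subset by blast
    have "rsel \<S> (\<Phi> a) (f a) = g a" if a: "a \<in> A" for a
    proof -
      have aZ: "a \<in> topspace Z" using a AZ by blast
      have v: "\<Phi> a \<noteq> {}" "closedin X (\<Phi> a)" "S_convex X \<S> (\<Phi> a)" using assms(7)[OF aZ] by auto
      have "f a \<in> \<Phi> a" using f(2) a H by auto
      then have "rsel \<S> (\<Phi> a) (f a) = f a" by (rule rsel_id[OF assms(3,4,5) t1 _ v(2,1,3)])
      then show ?thesis using f(2) a by simp
    qed
    then show "\<exists>h. continuous_map Z X h \<and> (\<forall>z\<in>topspace Z. h z \<in> \<Phi> z) \<and> (\<forall>a\<in>A. h a = g a)"
      using cont[OF f(1)] sel[OF f(1)] by blast
  qed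
qed

end
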